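(* Let $(M_1,f_1,g_1)$ and $(M_2,f_2,g_2)$ be $(m,n)$-hypermodules over a commutative Krasner $(m,n)$-hyperring $(R,f',g')$ with scalar identity $1$, let $Q_1$ and $Q_2$ be $n$-ary weakly classical prime subhypermodules of $M_1$ and $M_2$ respectively, and let $h:M_1\to M_2$ be a homomorphism. Then: (1) if $h$ is an epimorphism and $\mathrm{Ker}(h)\subseteq Q_1$, then $h(Q_1)$ is an $n$-ary weakly classical prime subhypermodule of $M_2$; (2) if $h$ is a monomorphism with $h^{-1}(Q_2)\neq M_1$, then $h^{-1}(Q_2)$ is an $n$-ary weakly classical prime subhypermodule of $M_1$.
   Context: A commutative Krasner $(m,n)$-hyperring with scalar identity $1$ is a triple $(R,f',g')$ where $(R,f')$ is a canonical $m$-ary hypergroup with zero $0$, $(R,g')$ is a commutative $n$-ary semigroup, $g'$ is distributive over $f'$, $0$ is a zero element for $g'$, and $g'(x,1^{(n-1)})=x$. Notation: $x_i^j$ denotes $x_i,\dots,x_j$ and $x^{(k)}$ denotes $x$ repeated $k$ times. An $(m,n)$-hypermodule over $R$ is a triple $(M,f,g)$ with $(M,f)$ a canonical $m$-ary hypergroup with zero $0$ and $g:R^{n-1}\times M\to P^*(M)$ satisfying: $g(r_1^{n-1},f(x_1^m))=f(g(r_1^{n-1},x_1),\dots,g(r_1^{n-1},x_m))$; $g(r_1^{i-1},f'(s_1^m),r_{i+1}^{n-1},x)=f(g(r_1^{i-1},s_1,r_{i+1}^{n-1},x),\dots,g(r_1^{i-1},s_m,r_{i+1}^{n-1},x))$;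 $g(r_1^{i-1},g'(r_i^{i+n-1}),r_{i+n}^{2n-2},x)=g(r_1^{n-1},g(r_n^{2n-2},x))$; $g(r_1^{i-1},0,r_{i+1}^{n-1},x)=\{0\}$; moreover $g(1^{(n-1)},a)=\{a\}$. A subhypermodule is a nonempty subset $N$ with $(N,f)$ an $m$-ary subhypergroup and $g(R^{(n-1)},N)\subseteq N$. A proper subhypermodule $Q$ of $M$ is $n$-ary weakly classical prime if for $r_1^{n-1}\in R$, $a\in M$, $0\notin g(r_1^{n-1},a)\subseteq Q$ implies $g(r_i,1^{(n-2)},a)\subseteq Q$ for some $1\le i\le n-1$. A homomorphism $h:M_1\to M_2$ is a map with $h(f_1(a_1^m))=f_2(h(a_1),\dots,h(a_m))$ and $h(g_1(r_1^{n-1},a))=g_2(r_1^{n-1},h(a))$ for all $a_1^m,a\in M_1$, $r_1^{n-1}\in R$; $\mathrm{Ker}(h)=\{a\in M_1:h(a)=0\}$; epimorphism means surjective, monomorphism injective. *)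

theory Defs
  imports Main "HOL-Library.Multiset"
begin

text \<open>Carriers are modelled by whole types: the hyperring R is the type 'r,
 the hypermodules are types 'a, 'b.  An m-ary hyperoperation is a function on lists
 (meaningful for lists of length m) returning a set; an n-ary operation returns an element.\<close>

definition lift :: "('a list \<Rightarrow> 'a set) \<Rightarrow> 'a set list \<Rightarrow> 'a set" where
  "lift f Xs = \<Union> {f xs | xs. list_all2 (\<in>) xs Xs}"

text \<open>f(x_1^(i), f(x_(i+1)^(i+m)), x_(i+m+1)^(2m-1)), with 0-based position i.\<close>
definition nested_hop :: "('a list \<Rightarrow> 'a set) \<Rightarrow> nat \<Rightarrow> 'a list \<Rightarrow> nat \<Rightarrow> 'a set" where
  "nested_hop f m xs i =
     lift f (map (\<lambda>x. {x}) (take i xs) @ [f (take m (drop i xs))] @ map (\<lambda>x. {x}) (drop (i + m) xs))"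

definition hop_assoc :: "('a list \<Rightarrow> 'a set) \<Rightarrow> nat \<Rightarrow> bool" where
  "hop_assoc f m \<longleftrightarrow> (\<forall>xs i j. length xs = 2*m - 1 \<and> i < m \<and> j < m \<longrightarrow>
       nested_hop f m xs i = nested_hop f m xs j)"

definition hinv :: "('a list \<Rightarrow> 'a set) \<Rightarrow> nat \<Rightarrow> 'a \<Rightarrow> 'a \<Rightarrow> 'a" where
  "hinv f m z x = (THE y. z \<in> f (x # y # replicate (m - 2) z))"

definition canonical_mary_hypergroup :: "('a list \<Rightarrow> 'a set) \<Rightarrow> nat \<Rightarrow> 'a \<Rightarrow> bool" where
  "canonical_mary_hypergroup f m z \<longleftrightarrow>
     2 \<le> m \<and>
     (\<forall>xs. length xs = m \<longrightarrow> f xs \<noteq> {}) \<and>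
     hop_assoc f m \<and>
     (\<forall>x. f (x # replicate (m - 1) z) = {x}) \<and>
     (\<forall>e. (\<forall>x. f (x # replicate (m - 1) e) = {x}) \<longrightarrow> e = z) \<and>
     (\<forall>x. \<exists>!y. z \<in> f (x # y # replicate (m - 2) z)) \<and>
     (\<forall>xs x i. length xs = m \<and> i < m \<and> x \<in> f xs \<longrightarrow>
        xs ! i \<in> f ((map (hinv f m z) xs)[i := x])) \<and>
     (\<forall>xs ys. length xs = m \<and> mset xs = mset ys \<longrightarrow> f xs = f ys)"

definition nary_semigroup :: "('r list \<Rightarrow> 'r) \<Rightarrow> nat \<Rightarrow> bool" where
  "nary_semigroup g n \<longleftrightarrow> (\<forall>xs i j. length xs = 2*n - 1 \<and> i < n \<and> j < n \<longrightarrow>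
      g (take i xs @ [g (take n (drop i xs))] @ drop (i + n) xs) =
      g (take j xs @ [g (take n (drop j xs))] @ drop (j + n) xs))"

definition comm_krasner_hyperring ::
  "('r list \<Rightarrow> 'r set) \<Rightarrow> ('r list \<Rightarrow> 'r) \<Rightarrow> nat \<Rightarrow> nat \<Rightarrow> 'r \<Rightarrow> 'r \<Rightarrow> bool" where
  "comm_krasner_hyperring f g m n z one \<longleftrightarrow>
     2 \<le> n \<and>
     canonical_mary_hypergroup f m z \<and>
     nary_semigroup g n \<and>
     (\<forall>xs ys. length xs = n \<and> mset xs = mset ys \<longrightarrow> g xs = g ys) \<and>
     (\<forall>as bs xs. length as + length bs = n - 1 \<and> length xs = m \<longrightarrow>
        (\<lambda>y. g (as @ [y] @ bs)) ` f xs = f (map (\<lambda>x. g (as @ [x] @ bs)) xs)) \<and>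
     (\<forall>as bs. length as + length bs = n - 1 \<longrightarrow> g (as @ [z] @ bs) = z) \<and>
     (\<forall>x. g (x # replicate (n - 1) one) = x)"

definition mn_hypermodule ::
  "('r list \<Rightarrow> 'r set) \<Rightarrow> ('r list \<Rightarrow> 'r) \<Rightarrow> nat \<Rightarrow> nat \<Rightarrow> 'r \<Rightarrow> 'r \<Rightarrow>
   ('a list \<Rightarrow> 'a set) \<Rightarrow> ('r list \<Rightarrow> 'a \<Rightarrow> 'a set) \<Rightarrow> 'a \<Rightarrow> bool" where
  "mn_hypermodule fR gR m n zR oneR f g z \<longleftrightarrow>
     canonical_mary_hypergroup f m z \<and>
     (\<forall>rs x. length rs = n - 1 \<longrightarrow> g rs x \<noteq> {}) \<and>
     (\<forall>rs xs. length rs = n - 1 \<and> length xs = m \<longrightarrow>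
        (\<Union>y\<in>f xs. g rs y) = lift f (map (g rs) xs)) \<and>
     (\<forall>as bs ss x. length as + length bs = n - 2 \<and> length ss = m \<longrightarrow>
        (\<Union>s\<in>fR ss. g (as @ [s] @ bs) x) = lift f (map (\<lambda>s. g (as @ [s] @ bs) x) ss)) \<and>
     (\<forall>rs i x. length rs = 2*n - 2 \<and> i < n - 1 \<longrightarrow>
        g (take i rs @ [gR (take n (drop i rs))] @ drop (i + n) rs) x =
        (\<Union>y\<in>g (drop (n - 1) rs) x. g (take (n - 1) rs) y)) \<and>
     (\<forall>as bs x. length as + length bs = n - 2 \<longrightarrow> g (as @ [zR] @ bs) x = {z}) \<and>
     (\<forall>a. g (replicate (n - 1) oneR) a = {a})"

definition mary_subhypergroup :: "('a list \<Rightarrow> 'a set) \<Rightarrow> nat \<Rightarrow> 'a set \<Rightarrow> bool" where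
  "mary_subhypergroup f m N \<longleftrightarrow>
     N \<noteq> {} \<and>
     (\<forall>xs. length xs = m \<and> set xs \<subseteq> N \<longrightarrow> f xs \<subseteq> N) \<and>
     (\<forall>a xs i. a \<in> N \<and> length xs = m \<and> set xs \<subseteq> N \<and> i < m \<longrightarrow>
        (\<exists>y\<in>N. a \<in> f (xs[i := y])))"

definition subhypermodule ::
  "nat \<Rightarrow> nat \<Rightarrow> ('a list \<Rightarrow> 'a set) \<Rightarrow> ('r list \<Rightarrow> 'a \<Rightarrow> 'a set) \<Rightarrow> 'a set \<Rightarrow> bool" where
  "subhypermodule m n f g N \<longleftrightarrow>
     N \<noteq> {} \<and> mary_subhypergroup f m N \<and>
     (\<forall>rs x. length rs = n - 1 \<and> x \<in> N \<longrightarrow> g rs x \<subseteq> N)"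

definition nary_weakly_classical_prime ::
  "nat \<Rightarrow> nat \<Rightarrow> 'r \<Rightarrow> ('a list \<Rightarrow> 'a set) \<Rightarrow> ('r list \<Rightarrow> 'a \<Rightarrow> 'a set) \<Rightarrow> 'a \<Rightarrow> 'a set \<Rightarrow> bool" where
  "nary_weakly_classical_prime m n oneR f g z Q \<longleftrightarrow>
     subhypermodule m n f g Q \<and> Q \<noteq> UNIV \<and>
     (\<forall>rs a. length rs = n - 1 \<and> z \<notin> g rs a \<and> g rs a \<subseteq> Q \<longrightarrow>
        (\<exists>i < n - 1. g (rs ! i # replicate (n - 2) oneR) a \<subseteq> Q))"

definition hypermodule_hom ::
  "nat \<Rightarrow> nat \<Rightarrow> ('a list \<Rightarrow> 'a set) \<Rightarrow> ('r list \<Rightarrow> 'a \<Rightarrow> 'a set) \<Rightarrow>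
   ('b list \<Rightarrow> 'b set) \<Rightarrow> ('r list \<Rightarrow> 'b \<Rightarrow> 'b set) \<Rightarrow> ('a \<Rightarrow> 'b) \<Rightarrow> bool" where
  "hypermodule_hom m n f1 g1 f2 g2 h \<longleftrightarrow>
     (\<forall>xs. length xs = m \<longrightarrow> h ` f1 xs = f2 (map h xs)) \<and>
     (\<forall>rs a. length rs = n - 1 \<longrightarrow> h ` g1 rs a = g2 rs (h a))"

definition Ker :: "('a \<Rightarrow> 'b) \<Rightarrow> 'b \<Rightarrow> 'a set" where
  "Ker h z2 = {a. h a = z2}"

end

theory Submission
  imports Defs
begin

lemma cmh_m: "canonical_mary_hypergroup f m z \<Longrightarrow> 2 \<le> m"
  by (drule canonical_mary_hypergroup_def[THEN iffD1, THEN conjunct1])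

lemma cmh_ne: "canonical_mary_hypergroup f m z \<Longrightarrow> length xs = m \<Longrightarrow> f xs \<noteq> {}"
  by (drule canonical_mary_hypergroup_def[THEN iffD1, THEN conjunct2, THEN conjunct1]) blast

lemma cmh_rev: "canonical_mary_hypergroup f m z \<Longrightarrow> length xs = m \<Longrightarrow> i < m \<Longrightarrow> x \<in> f xs
  \<Longrightarrow> xs ! i \<in> f ((map (hinv f m z) xs)[i := x])"
  by (drule canonical_mary_hypergroup_def[THEN iffD1, THEN conjunct2, THEN conjunct2, THEN conjunct2, THEN conjunct2, THEN conjunct2, THEN conjunct2, THEN conjunct1]) blast

lemma cmh_id: "canonical_mary_hypergroup f m z \<Longrightarrow> f (x # replicate (m - 1) z) = {x}"
  by (drule canonical_mary_hypergroup_def[THEN iffD1, THEN conjunct2, THEN conjunct2, THEN conjunct2, THEN conjunct1]) blast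

lemma cmh_inv: "canonical_mary_hypergroup f m z \<Longrightarrow> \<exists>!y. z \<in> f (x # y # replicate (m - 2) z)"
  by (drule canonical_mary_hypergroup_def[THEN iffD1, THEN conjunct2, THEN conjunct2, THEN conjunct2, THEN conjunct2, THEN conjunct2, THEN conjunct1]) blast

lemma cmh_comm: "canonical_mary_hypergroup f m z \<Longrightarrow> length xs = m \<Longrightarrow> mset xs = mset ys \<Longrightarrow> f xs = f ys"
  by (drule canonical_mary_hypergroup_def[THEN iffD1, THEN conjunct2, THEN conjunct2, THEN conjunct2, THEN conjunct2, THEN conjunct2, THEN conjunct2, THEN conjunct2]) blast

lemma hinv_in: "canonical_mary_hypergroup f m z \<Longrightarrow> z \<in> f (x # hinv f m z x # replicate (m - 2) z)"
  unfolding hinv_def by (rule theI'[OF cmh_inv])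

lemma hinv_uniq: "canonical_mary_hypergroup f m z \<Longrightarrow> z \<in> f (x # y # replicate (m - 2) z) \<Longrightarrow> y = hinv f m z x"
  unfolding hinv_def by (rule the1_equality[OF cmh_inv, symmetric])

lemma hinv_hinv: assumes "canonical_mary_hypergroup f m z" shows "hinv f m z (hinv f m z x) = x"
proof -
  have m: "2 \<le> m" using cmh_m[OF assms] .
  have "f (x # hinv f m z x # replicate (m - 2) z) = f (hinv f m z x # x # replicate (m - 2) z)"
    by (rule cmh_comm[OF assms]) (use m in auto)
  with hinv_in[OF assms, of x] have "z \<in> f (hinv f m z x # x # replicate (m - 2) z)" by simp
  from hinv_uniq[OF assms this] show ?thesis by simp
qed

lemma map_hinv_hinv: "canonical_mary_hypergroup f m z \<Longrightarrow> map (hinv f m z) (map (hinv f m z) xs) = xs"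
  by (induct xs) (auto simp: hinv_hinv)

lemma hinv_zero: assumes "canonical_mary_hypergroup f m z" shows "hinv f m z z = z"
proof -
  have m: "2 \<le> m" using cmh_m[OF assms] .
  have e: "m - 1 = Suc (m - 2)" using m by arith
  have "z # replicate (m - 2) z = replicate (m - 1) z" unfolding e by simp
  moreover have "f (z # replicate (m - 1) z) = {z}" using cmh_id[OF assms] .
  ultimately have "z \<in> f (z # z # replicate (m - 2) z)" by simp
  from hinv_uniq[OF assms this] show ?thesis by simp
qed

lemma reproduce: assumes c: "canonical_mary_hypergroup f m z" and l: "length xs = m" and i: "i < m"
  shows "\<exists>y \<in> f ((map (hinv f m z) xs)[i := a]). a \<in> f (xs[i := y])"
proof -
  let ?ys = "(map (hinv f m z) xs)[i := a]"
  obtain y where y: "y \<in> f ?ys" using cmh_ne[OF c, of ?ys] l by auto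
  have "?ys ! i \<in> f ((map (hinv f m z) ?ys)[i := y])" using cmh_rev[OF c _ i y] l by simp
  moreover have "(map (hinv f m z) ?ys)[i := y] = xs[i := y]"
    by (simp add: map_update hinv_hinv[OF c] comp_def)
  ultimately show ?thesis using y i l by auto
qed

lemma sub_hinv: assumes c: "canonical_mary_hypergroup f m z" and N: "mary_subhypergroup f m N"
  and zN: "z \<in> N" and xN: "x \<in> N" shows "hinv f m z x \<in> N"
proof -
  have m: "2 \<le> m" using cmh_m[OF c] .
  let ?xs = "x # replicate (m - 1) z"
  have "length ?xs = m" "set ?xs \<subseteq> N" "1 < m" using m zN xN by auto
  then obtain y where y: "y \<in> N" "z \<in> f (?xs[1 := y])" using N zN unfolding mary_subhypergroup_def by blast
  have "?xs[1 := y] = x # y # replicate (m - 2) z" using m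
    by (cases "m - 1") auto
  with y hinv_uniq[OF c] show ?thesis by metis
qed

lemma mod_cmh: "mn_hypermodule fR gR m n zR oneR f g z \<Longrightarrow> canonical_mary_hypergroup f m z"
  by (drule mn_hypermodule_def[THEN iffD1, THEN conjunct1])

lemma mod_zero: assumes "mn_hypermodule fR gR m n zR oneR f g z" "2 \<le> n"
  shows "g (zR # replicate (n - 2) oneR) a = {z}"
proof -
  have "\<forall>as bs x. length as + length bs = n - 2 \<longrightarrow> g (as @ [zR] @ bs) x = {z}"
    using assms(1)[THEN mn_hypermodule_def[THEN iffD1], THEN conjunct2, THEN conjunct2, THEN conjunct2, THEN conjunct2, THEN conjunct2, THEN conjunct1] .
  from this[rule_format, of "[]" "replicate (n - 2) oneR" a] show ?thesis by simp
qed

lemma hom_zero: assumes M1: "mn_hypermodule fR gR m n zR oneR f1 g1 z1"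
    and M2: "mn_hypermodule fR gR m n zR oneR f2 g2 z2"
    and hom: "hypermodule_hom m n f1 g1 f2 g2 h" and n: "2 \<le> n"
  shows "h z1 = z2"
proof -
  let ?rs = "zR # replicate (n - 2) oneR"
  have "length ?rs = n - 1" using n by simp
  then have "h ` g1 ?rs z1 = g2 ?rs (h z1)" using hom by (simp add: hypermodule_hom_def)
  then show ?thesis using mod_zero[OF M1 n] mod_zero[OF M2 n] by simp
qed

lemma hom_hinv: assumes M1: "mn_hypermodule fR gR m n zR oneR f1 g1 z1"
    and M2: "mn_hypermodule fR gR m n zR oneR f2 g2 z2"
    and hom: "hypermodule_hom m n f1 g1 f2 g2 h" and n: "2 \<le> n"
  shows "h (hinv f1 m z1 x) = hinv f2 m z2 (h x)"
proof -
  have c1: "canonical_mary_hypergroup f1 m z1" using mod_cmh[OF M1] .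
  have c2: "canonical_mary_hypergroup f2 m z2" using mod_cmh[OF M2] .
  have m: "2 \<le> m" using cmh_m[OF c1] .
  have hz: "h z1 = z2" using hom_zero[OF M1 M2 hom n] .
  let ?xs = "x # hinv f1 m z1 x # replicate (m - 2) z1"
  have "h ` f1 ?xs = f2 (map h ?xs)" using hom m by (simp add: hypermodule_hom_def)
  moreover have "z2 \<in> h ` f1 ?xs" using hinv_in[OF c1, of x] hz by blast
  ultimately have "z2 \<in> f2 (h x # h (hinv f1 m z1 x) # replicate (m - 2) z2)" using hz by simp
  from hinv_uniq[OF c2 this] show ?thesis .
qed

lemma lift_list: "set xs \<subseteq> h ` Q \<Longrightarrow> \<exists>ys. xs = map h ys \<and> set ys \<subseteq> Q"
proof (induct xs)
  case Nil then show ?case by simp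
next
  case (Cons x xs)
  then obtain ys where "xs = map h ys" "set ys \<subseteq> Q" by auto
  moreover obtain y where "y \<in> Q" "x = h y" using Cons.prems by auto
  ultimately show ?case by (intro exI[of _ "y # ys"]) auto
qed

theorem mainTheorem6:
  fixes fR :: "'r list \<Rightarrow> 'r set" and gR :: "'r list \<Rightarrow> 'r"
    and f1 :: "'a list \<Rightarrow> 'a set" and g1 :: "'r list \<Rightarrow> 'a \<Rightarrow> 'a set"
    and f2 :: "'b list \<Rightarrow> 'b set" and g2 :: "'r list \<Rightarrow> 'b \<Rightarrow> 'b set"
    and h :: "'a \<Rightarrow> 'b"
  assumes R: "comm_krasner_hyperring fR gR m n zR oneR"
    and M1: "mn_hypermodule fR gR m n zR oneR f1 g1 z1"
    and M2: "mn_hypermodule fR gR m n zR oneR f2 g2 z2"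
    and Q1: "nary_weakly_classical_prime m n oneR f1 g1 z1 Q1"
    and Q2: "nary_weakly_classical_prime m n oneR f2 g2 z2 Q2"
    and hom: "hypermodule_hom m n f1 g1 f2 g2 h"
  shows "(surj h \<and> Ker h z2 \<subseteq> Q1 \<longrightarrow> nary_weakly_classical_prime m n oneR f2 g2 z2 (h ` Q1)) \<and>
         (inj h \<and> h -` Q2 \<noteq> UNIV \<longrightarrow> nary_weakly_classical_prime m n oneR f1 g1 z1 (h -` Q2))"
proof -
  have n: "2 \<le> n" using R[THEN comm_krasner_hyperring_def[THEN iffD1], THEN conjunct1] .
  have c1: "canonical_mary_hypergroup f1 m z1" using mod_cmh[OF M1] .
  have c2: "canonical_mary_hypergroup f2 m z2" using mod_cmh[OF M2] .
  have m: "2 \<le> m" using cmh_m[OF c1] .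
  have hz: "h z1 = z2" using hom_zero[OF M1 M2 hom n] .
  have hf: "\<And>xs. length xs = m \<Longrightarrow> h ` f1 xs = f2 (map h xs)" using hom by (simp add: hypermodule_hom_def)
  have hg: "\<And>rs a. length rs = n - 1 \<Longrightarrow> h ` g1 rs a = g2 rs (h a)" using hom by (simp add: hypermodule_hom_def)
  have zrl: "length (zR # replicate (n - 2) oneR) = n - 1" using n by simp
  have S1: "subhypermodule m n f1 g1 Q1" and P1: "Q1 \<noteq> UNIV"
    and W1: "\<And>rs a. length rs = n - 1 \<Longrightarrow> z1 \<notin> g1 rs a \<Longrightarrow> g1 rs a \<subseteq> Q1 \<Longrightarrow>
        (\<exists>i < n - 1. g1 (rs ! i # replicate (n - 2) oneR) a \<subseteq> Q1)"
    using Q1 unfolding nary_weakly_classical_prime_def by blast+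
  have S2: "subhypermodule m n f2 g2 Q2"
    and W2: "\<And>rs a. length rs = n - 1 \<Longrightarrow> z2 \<notin> g2 rs a \<Longrightarrow> g2 rs a \<subseteq> Q2 \<Longrightarrow>
        (\<exists>i < n - 1. g2 (rs ! i # replicate (n - 2) oneR) a \<subseteq> Q2)"
    using Q2 unfolding nary_weakly_classical_prime_def by blast+
  have Q1ne: "Q1 \<noteq> {}" and Q1f: "\<And>xs. length xs = m \<Longrightarrow> set xs \<subseteq> Q1 \<Longrightarrow> f1 xs \<subseteq> Q1"
    and Q1r: "\<And>a xs i. a \<in> Q1 \<Longrightarrow> length xs = m \<Longrightarrow> set xs \<subseteq> Q1 \<Longrightarrow> i < m \<Longrightarrow>
        (\<exists>y\<in>Q1. a \<in> f1 (xs[i := y]))"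
    and Q1g: "\<And>rs x. length rs = n - 1 \<Longrightarrow> x \<in> Q1 \<Longrightarrow> g1 rs x \<subseteq> Q1"
    using S1 unfolding subhypermodule_def mary_subhypergroup_def by blast+
  have Q2sub: "mary_subhypergroup f2 m Q2" and Q2ne: "Q2 \<noteq> {}" and Q2f: "\<And>xs. length xs = m \<Longrightarrow> set xs \<subseteq> Q2 \<Longrightarrow> f2 xs \<subseteq> Q2"
    and Q2g: "\<And>rs x. length rs = n - 1 \<Longrightarrow> x \<in> Q2 \<Longrightarrow> g2 rs x \<subseteq> Q2"
    using S2 unfolding subhypermodule_def mary_subhypergroup_def by blast+
  have z1Q: "z1 \<in> Q1"
  proof -
    obtain q where "q \<in> Q1" using Q1ne by blast
    from Q1g[OF zrl this] show ?thesis using mod_zero[OF M1 n] by simp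
  qed
  have z2Q: "z2 \<in> Q2"
  proof -
    obtain q where "q \<in> Q2" using Q2ne by blast
    from Q2g[OF zrl this] show ?thesis using mod_zero[OF M2 n] by simp
  qed
  have part1: "nary_weakly_classical_prime m n oneR f2 g2 z2 (h ` Q1)"
    if sj: "surj h" and K: "Ker h z2 \<subseteq> Q1"
  proof -
    have key: "a \<in> Q1" if q: "q \<in> Q1" and e: "h a = h q" for a q
    proof -
      let ?xs = "a # hinv f1 m z1 q # replicate (m - 2) z1"
      have lx: "length ?xs = m" using m by simp
      have "z2 \<in> f2 (h q # hinv f2 m z2 (h q) # replicate (m - 2) z2)" using hinv_in[OF c2] .
      also have "\<dots> = f2 (map h ?xs)" using e hz hom_hinv[OF M1 M2 hom n, of q] by simp
      also have "\<dots> = h ` f1 ?xs" using hf[OF lx] by simp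
      finally obtain x where x: "x \<in> f1 ?xs" "h x = z2" by blast
      have xQ: "x \<in> Q1" using K x(2) by (auto simp: Ker_def)
      have "?xs ! 0 \<in> f1 ((map (hinv f1 m z1) ?xs)[0 := x])" using cmh_rev[OF c1 lx _ x(1), of 0] m by simp
      then have "a \<in> f1 (x # q # replicate (m - 2) z1)"
        by (simp add: hinv_hinv[OF c1] hinv_zero[OF c1])
      moreover have "f1 (x # q # replicate (m - 2) z1) \<subseteq> Q1"
        by (rule Q1f) (use m xQ q z1Q in auto)
      ultimately show ?thesis by blast
    qed
    have sub: "subhypermodule m n f2 g2 (h ` Q1)"
      unfolding subhypermodule_def mary_subhypergroup_def
    proof (intro conjI allI impI)
      show "h ` Q1 \<noteq> {}" using Q1ne by simp
      then show "h ` Q1 \<noteq> {}" .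
    next
      fix xs assume a: "length xs = m \<and> set xs \<subseteq> h ` Q1"
      then obtain ys where ys: "xs = map h ys" "set ys \<subseteq> Q1"
        using lift_list by blast
      show "f2 xs \<subseteq> h ` Q1" using a ys hf[of ys] Q1f[of ys] by (metis image_mono length_map)
    next
      fix a xs i assume a: "a \<in> h ` Q1 \<and> length xs = m \<and> set xs \<subseteq> h ` Q1 \<and> i < m"
      then obtain a' where a': "a' \<in> Q1" "a = h a'" by blast
      obtain ys where ys: "xs = map h ys" "set ys \<subseteq> Q1"
        using a lift_list by blast
      then obtain y where y: "y \<in> Q1" "a' \<in> f1 (ys[i := y])" using Q1r[OF a'(1), of ys i] a by auto
      have "h a' \<in> h ` f1 (ys[i := y])" using y by blast
      also have "\<dots> = f2 (xs[i := h y])" using hf[of "ys[i := y]"] a ys by (simp add: map_update)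
      finally show "\<exists>y\<in>h ` Q1. a \<in> f2 (xs[i := y])" using y a' by blast
    next
      fix rs :: "'r list" and x assume a: "length rs = n - 1 \<and> x \<in> h ` Q1"
      then obtain x' where "x' \<in> Q1" "x = h x'" by blast
      then show "g2 rs x \<subseteq> h ` Q1" using a hg[of rs x'] Q1g[of rs x'] by auto
    qed
    have nu: "h ` Q1 \<noteq> UNIV"
    proof
      assume U: "h ` Q1 = UNIV"
      obtain a where "a \<notin> Q1" using P1 by blast
      moreover have "h a \<in> h ` Q1" using U by simp
      ultimately show False using key by blast
    qed
    show ?thesis unfolding nary_weakly_classical_prime_def
    proof (intro conjI sub nu allI impI)
      fix rs :: "'r list" and b assume a: "length rs = n - 1 \<and> z2 \<notin> g2 rs b \<and> g2 rs b \<subseteq> h ` Q1"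
      obtain a0 where b: "b = h a0" using sj by (metis surjD)
      have e: "g2 rs b = h ` g1 rs a0" using hg a b by simp
      have "z1 \<notin> g1 rs a0" using a e hz by blast
      moreover have "g1 rs a0 \<subseteq> Q1" using a e key by blast
      ultimately obtain i where i: "i < n - 1" "g1 (rs ! i # replicate (n - 2) oneR) a0 \<subseteq> Q1"
        using W1 a by blast
      have "length (rs ! i # replicate (n - 2) oneR) = n - 1" using n by simp
      then have "g2 (rs ! i # replicate (n - 2) oneR) b \<subseteq> h ` Q1" using hg i b by (metis image_mono)
      then show "\<exists>i<n - 1. g2 (rs ! i # replicate (n - 2) oneR) b \<subseteq> h ` Q1" using i by blast
    qed
  qed
  have part2: "nary_weakly_classical_prime m n oneR f1 g1 z1 (h -` Q2)"
    if ij: "inj h" and NU: "h -` Q2 \<noteq> UNIV"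
  proof -
    have sub: "subhypermodule m n f1 g1 (h -` Q2)"
      unfolding subhypermodule_def mary_subhypergroup_def
    proof (intro conjI allI impI)
      show "h -` Q2 \<noteq> {}" using z2Q hz by blast
      then show "h -` Q2 \<noteq> {}" .
    next
      fix xs assume a: "length xs = m \<and> set xs \<subseteq> h -` Q2"
      show "f1 xs \<subseteq> h -` Q2" using a hf[of xs] Q2f[of "map h xs"] by auto
    next
      fix a xs i assume a: "a \<in> h -` Q2 \<and> length xs = m \<and> set xs \<subseteq> h -` Q2 \<and> i < m"
      define ys where "ys = (map (hinv f1 m z1) xs)[i := a]"
      obtain y where y: "y \<in> f1 ys" "a \<in> f1 (xs[i := y])" using reproduce[OF c1, of xs i a] a ys_def by blast
      have ly: "length ys = m" using a ys_def by simp
      have "set (map h ys) \<subseteq> Q2"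
      proof (rule subsetI)
        fix w assume "w \<in> set (map h ys)"
        then obtain j where j: "j < m" "w = h (ys ! j)" using ly by (metis in_set_conv_nth length_map nth_map)
        show "w \<in> Q2"
        proof (cases "j = i")
          case True then show ?thesis using j a ys_def by simp
        next
          case False
          then have "w = hinv f2 m z2 (h (xs ! j))" using j a ys_def hom_hinv[OF M1 M2 hom n] by simp
          moreover have "h (xs ! j) \<in> Q2" using a j by (auto dest: nth_mem)
          ultimately show ?thesis using sub_hinv[OF c2 Q2sub z2Q] by simp
        qed
      qed
      then have "h ` f1 ys \<subseteq> Q2" using hf[OF ly] Q2f[of "map h ys"] ly by simp
      then show "\<exists>y\<in>h -` Q2. a \<in> f1 (xs[i := y])" using y by blast
    next
      fix rs :: "'r list" and x assume a: "length rs = n - 1 \<and> x \<in> h -` Q2"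
      then show "g1 rs x \<subseteq> h -` Q2" using hg[of rs x] Q2g[of rs "h x"] by auto
    qed
    show ?thesis unfolding nary_weakly_classical_prime_def
    proof (intro conjI sub NU allI impI)
      fix rs :: "'r list" and a assume a: "length rs = n - 1 \<and> z1 \<notin> g1 rs a \<and> g1 rs a \<subseteq> h -` Q2"
      have e: "g2 rs (h a) = h ` g1 rs a" using hg a by simp
      have "z2 \<notin> g2 rs (h a)"
      proof
        assume "z2 \<in> g2 rs (h a)"
        then obtain y where y: "y \<in> g1 rs a" "h y = z2" using e by auto
        then have "y = z1" using hz by (intro injD[OF ij]) simp
        then show False using y a by simp
      qed
      moreover have "g2 rs (h a) \<subseteq> Q2" unfolding e using a by auto
      ultimately have "\<exists>i < n - 1. g2 (rs ! i # replicate (n - 2) oneR) (h a) \<subseteq> Q2"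
        using W2[of rs "h a"] a by simp
      then obtain i where i: "i < n - 1" "g2 (rs ! i # replicate (n - 2) oneR) (h a) \<subseteq> Q2"
        by blast
      have "length (rs ! i # replicate (n - 2) oneR) = n - 1" using n by simp
      then have "h ` g1 (rs ! i # replicate (n - 2) oneR) a \<subseteq> Q2" using hg i by simp
      then have "g1 (rs ! i # replicate (n - 2) oneR) a \<subseteq> h -` Q2" by blast
      then show "\<exists>i<n - 1. g1 (rs ! i # replicate (n - 2) oneR) a \<subseteq> h -` Q2" using i by blast
    qed
  qed
  show ?thesis using part1 part2 by blast
qed

end
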